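(* Let $\mu>1$ be a Salem number of degree four, $K=\mathbb{Q}(\mu+\mu^{-1})$, and let $\tau$ be an embedding of $\mathbb{Q}(\mu)$ into $\mathbb{C}$ whose restriction to $K$ is the nontrivial embedding of $K$ (so $\tau(\mu)=e^{i\nu}$ for some $\nu\in(0,\pi)$, choosing $\tau$ appropriately). Suppose there is $D\in\mathcal{O}_K$ with $\mathbb{Q}(\mu)=K(\sqrt D)$ and $\mu=t+u\sqrt D$ with $t,u\in\mathcal{O}_K$. Then there exists $m\in\{0,1,2\}$ such that $\mu^{m+1}=t_m+u_m\sqrt D$ with $t_m,u_m\in\mathcal{O}_K$ and $\tau(t_m)^2>\tfrac12$.
   Context: A Salem number is a real algebraic integer $\lambda>1$ such that $\lambda^{-1}$ is a Galois conjugate of $\lambda$ and all other conjugates of $\lambda$ lie on the unit circle. $\mathcal{O}_K$ is the ring of integers of $K$. *)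

theory Defs
  imports "HOL-Analysis.Analysis" "HOL-Computational_Algebra.Computational_Algebra"
begin

definition is_subfield :: "complex set \<Rightarrow> bool" where
  "is_subfield F \<longleftrightarrow> 0 \<in> F \<and> 1 \<in> F \<and>
     (\<forall>x\<in>F. \<forall>y\<in>F. x + y \<in> F \<and> x * y \<in> F) \<and>
     (\<forall>x\<in>F. - x \<in> F) \<and> (\<forall>x\<in>F. x \<noteq> 0 \<longrightarrow> inverse x \<in> F)"

definition gen_field :: "complex set \<Rightarrow> complex set" where
  "gen_field A = \<Inter>{F. is_subfield F \<and> A \<subseteq> F}"

definition ring_of_integers :: "complex set \<Rightarrow> complex set" where
  "ring_of_integers F = {x \<in> F. algebraic_int x}"

definition min_poly_rat :: "rat poly \<Rightarrow> complex \<Rightarrow> bool" where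
  "min_poly_rat p x \<longleftrightarrow> irreducible p \<and> lead_coeff p = 1 \<and>
      poly (map_poly of_rat p) x = 0"

definition conjugates :: "complex \<Rightarrow> complex set" where
  "conjugates x = {z. \<exists>p. min_poly_rat p x \<and> poly (map_poly of_rat p) z = 0}"

definition salem_number :: "complex \<Rightarrow> bool" where
  "salem_number x \<longleftrightarrow> x \<in> \<real> \<and> 1 < Re x \<and> algebraic_int x \<and>
     inverse x \<in> conjugates x \<and>
     (\<forall>z \<in> conjugates x. z \<noteq> x \<longrightarrow> z \<noteq> inverse x \<longrightarrow> cmod z = 1)"

definition alg_degree :: "complex \<Rightarrow> nat" where
  "alg_degree x = (THE n. \<exists>p. min_poly_rat p x \<and> degree p = n)"

definition field_embedding :: "complex set \<Rightarrow> (complex \<Rightarrow> complex) \<Rightarrow> bool" where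
  "field_embedding F \<tau> \<longleftrightarrow> \<tau> 1 = 1 \<and>
     (\<forall>x\<in>F. \<forall>y\<in>F. \<tau> (x + y) = \<tau> x + \<tau> y \<and> \<tau> (x * y) = \<tau> x * \<tau> y)"

end

theory Submission imports Defs "Jordan_Normal_Form.Char_Poly"
begin

definition zspan :: "complex set \<Rightarrow> complex set" where
  "zspan G = {w. \<exists>c::complex\<Rightarrow>int. w = (\<Sum>g\<in>G. of_int (c g) * g)}"

lemma det_trick:
  fixes z :: complex
  assumes fin: "finite G" and one: "1 \<in> G" and cl: "\<And>g. g \<in> G \<Longrightarrow> z * g \<in> zspan G"
  shows "algebraic_int z"
proof -
  obtain xs where xs: "set xs = G" "distinct xs" using finite_distinct_list[OF fin] by blast
  define N where "N = length xs"
  have "\<forall>k\<in>{..<N}. \<exists>c::complex\<Rightarrow>int. z * xs ! k = (\<Sum>g\<in>G. of_int (c g) * g)"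
  proof
    fix k assume "k \<in> {..<N}"
    hence "xs ! k \<in> G" using xs(1) unfolding N_def by auto
    thus "\<exists>c::complex\<Rightarrow>int. z * xs ! k = (\<Sum>g\<in>G. of_int (c g) * g)"
      using cl unfolding zspan_def by blast
  qed
  then obtain c where c0: "\<forall>k\<in>{..<N}. z * xs ! k = (\<Sum>g\<in>G. of_int (c k g) * g)"
    by (rule bchoice[THEN exE]) blast
  have c: "z * xs ! k = (\<Sum>g\<in>G. of_int (c k g) * g)" if "k < N" for k using c0 that by blast
  have sumconv: "(\<Sum>g\<in>G. f g) = (\<Sum>l<N. f (xs ! l))" for f :: "complex \<Rightarrow> complex"
  proof -
    have "(\<Sum>g\<in>G. f g) = sum_list (map f xs)" using xs by (simp add: sum_list_distinct_conv_sum_set)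
    also have "\<dots> = (\<Sum>l<N. f (xs ! l))" unfolding N_def
      by (simp add: sum_list_sum_nth atLeast0LessThan)
    finally show ?thesis .
  qed
  define A :: "int mat" where "A = mat N N (\<lambda>(k,l). c k (xs ! l))"
  define B :: "complex mat" where "B = map_mat of_int A"
  define w :: "complex vec" where "w = vec N (\<lambda>k. xs ! k)"
  have A: "A \<in> carrier_mat N N" unfolding A_def by simp
  have B: "B \<in> carrier_mat N N" unfolding B_def using A by simp
  have "B *\<^sub>v w = z \<cdot>\<^sub>v w"
  proof (rule eq_vecI)
    fix k assume "k < dim_vec (z \<cdot>\<^sub>v w)"
    hence k: "k < N" by (simp add: w_def)
    have "(B *\<^sub>v w) $ k = (\<Sum>l<N. of_int (c k (xs ! l)) * xs ! l)"
      using k by (simp add: B_def A_def w_def mult_mat_vec_def scalar_prod_def atLeast0LessThan)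
    also have "\<dots> = z * xs ! k" using c[OF k] sumconv by simp
    finally show "(B *\<^sub>v w) $ k = (z \<cdot>\<^sub>v w) $ k" using k by (simp add: w_def)
  qed (simp add: B_def A_def w_def)
  moreover have "w \<noteq> 0\<^sub>v N"
  proof
    assume "w = 0\<^sub>v N"
    obtain k where "k < N" "xs ! k = 1" using one xs(1) unfolding N_def by (metis in_set_conv_nth)
    with \<open>w = 0\<^sub>v N\<close> show False unfolding w_def by (metis index_vec index_zero_vec(1) zero_neq_one)
  qed
  ultimately have "eigenvector B w z" unfolding eigenvector_def using B by (simp add: w_def)
  hence "eigenvalue B z" unfolding eigenvalue_def by blast
  hence "poly (char_poly B) z = 0" using eigenvalue_root_char_poly[OF B] by simp
  moreover have "char_poly B = map_poly of_int (char_poly A)"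
    unfolding B_def by (rule of_int_hom.char_poly_hom[OF A])
  moreover have "lead_coeff (char_poly A) = 1" using degree_monic_char_poly[OF A] by simp
  ultimately show ?thesis unfolding algebraic_int_altdef_ipoly by auto
qed

lemma zspan_add: "a \<in> zspan G \<Longrightarrow> b \<in> zspan G \<Longrightarrow> a + b \<in> zspan G"
proof -
  assume "a \<in> zspan G" "b \<in> zspan G"
  then obtain c d where "a = (\<Sum>g\<in>G. of_int (c g) * g)" "b = (\<Sum>g\<in>G. of_int (d g) * g)"
    unfolding zspan_def by blast
  hence "a + b = (\<Sum>g\<in>G. of_int (c g + d g) * g)" by (simp add: sum.distrib distrib_right)
  thus ?thesis unfolding zspan_def by (intro CollectI exI[of _ "\<lambda>g. c g + d g"])
qed

lemma zspan_smult: "a \<in> zspan G \<Longrightarrow> of_int k * a \<in> zspan G"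
proof -
  assume "a \<in> zspan G"
  then obtain c where "a = (\<Sum>g\<in>G. of_int (c g) * g)" unfolding zspan_def by blast
  hence "of_int k * a = (\<Sum>g\<in>G. of_int (k * c g) * g)" by (simp add: sum_distrib_left mult.assoc)
  thus ?thesis unfolding zspan_def by (intro CollectI exI[of _ "\<lambda>g. k * c g"])
qed

lemma zspan_0: "0 \<in> zspan G"
  unfolding zspan_def by (rule CollectI, rule exI[of _ "\<lambda>_. 0"]) simp

lemma zspan_gen: "finite G \<Longrightarrow> g \<in> G \<Longrightarrow> g \<in> zspan G"
proof -
  assume "finite G" "g \<in> G"
  hence "(\<Sum>h\<in>G. of_int (if h = g then 1 else 0) * h) = g"
  proof -
    have "(\<Sum>h\<in>G. of_int (if h = g then 1 else 0) * h) = (\<Sum>h\<in>G. if h = g then h else 0)"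
      by (rule sum.cong) auto
    also have "\<dots> = g" using \<open>finite G\<close> \<open>g \<in> G\<close> by (simp add: sum.delta)
    finally show ?thesis .
  qed
  thus ?thesis unfolding zspan_def by (intro CollectI exI[of _ "\<lambda>h. if h = g then 1 else 0"]) simp
qed

lemma zspan_sum: "finite I \<Longrightarrow> (\<And>i. i \<in> I \<Longrightarrow> f i \<in> zspan G) \<Longrightarrow> sum f I \<in> zspan G"
  by (induction I rule: finite_induct) (auto intro: zspan_add zspan_0)

lemma zspan_mult:
  assumes "\<And>g. g \<in> G \<Longrightarrow> x * g \<in> zspan G" "a \<in> zspan G" "finite G"
  shows "x * a \<in> zspan G"
proof -
  obtain c where "a = (\<Sum>g\<in>G. of_int (c g) * g)" using assms(2) unfolding zspan_def by blast
  hence "x * a = (\<Sum>g\<in>G. of_int (c g) * (x * g))" by (simp add: sum_distrib_left algebra_simps)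
  also have "\<dots> \<in> zspan G" using assms by (intro zspan_sum zspan_smult) auto
  finally show ?thesis .
qed

lemma algebraic_int_rel:
  fixes x :: complex
  assumes "algebraic_int x"
  obtains n a where "n > 0" "x ^ n = (\<Sum>r<n. of_int (a r) * x ^ r)"
proof -
  obtain p where p: "poly (map_poly of_int p) x = 0" "lead_coeff p = 1"
    using assms unfolding algebraic_int_altdef_ipoly by blast
  define n where "n = degree p"
  define q :: "complex poly" where "q = map_poly of_int p"
  have dq: "degree q = n"
    unfolding n_def q_def by (rule degree_map_poly) simp
  have cq: "coeff q i = of_int (coeff p i)" for i
    unfolding q_def by (rule coeff_map_poly) simp
  have "0 = (\<Sum>i\<le>n. coeff q i * x ^ i)"
  proof -
    have "poly q x = 0" using p(1) unfolding q_def .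
    thus ?thesis using poly_altdef[of q x] unfolding dq by simp
  qed
  also have "{..n} = insert n {..<n}" by auto
  also have "(\<Sum>i\<in>insert n {..<n}. coeff q i * x ^ i) = coeff q n * x ^ n + (\<Sum>i<n. coeff q i * x ^ i)"
    by (rule sum.insert) auto
  also have "coeff q n = 1" using p(2) cq unfolding n_def by simp
  finally have eq0: "0 = 1 * x ^ n + (\<Sum>i<n. of_int (coeff p i) * x ^ i)" by (simp only: cq)
  hence "x ^ n = - (\<Sum>i<n. of_int (coeff p i) * x ^ i)"
    by (simp only: mult_1 eq_neg_iff_add_eq_0)
  also have "\<dots> = (\<Sum>r<n. of_int (- coeff p r) * x ^ r)"
    by (simp only: sum_negf[symmetric] of_int_minus mult_minus_left)
  finally have eq: "x ^ n = (\<Sum>r<n. of_int (- coeff p r) * x ^ r)" .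
  have n0: "n > 0"
  proof (rule ccontr)
    assume "\<not> n > 0" hence "n = 0" by simp
    with eq show False by simp
  qed
  show ?thesis by (rule that[OF n0 eq])
qed

lemma step_x:
  fixes x y :: complex
  assumes n: "n > 0" and rel: "x ^ n = (\<Sum>r<n. of_int (a r) * x ^ r)"
    and G: "G = (\<lambda>(i,j). x ^ i * y ^ j) ` ({..<n} \<times> {..<m})"
    and g: "g \<in> G"
  shows "x * g \<in> zspan G"
proof -
  have fin: "finite G" using G by simp
  obtain i j where ij: "i < n" "j < m" "g = x ^ i * y ^ j" using g G by auto
  show ?thesis
  proof (cases "Suc i < n")
    case True
    hence "x * g \<in> G" using ij G by (auto intro!: image_eqI[of _ _ "(Suc i, j)"])
    thus ?thesis using fin by (rule zspan_gen[rotated])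
  next
    case False
    hence "Suc i = n" using ij by simp
    have "x * g = x ^ Suc i * y ^ j" using ij by (simp add: mult.assoc)
    also have "\<dots> = x ^ n * y ^ j" using \<open>Suc i = n\<close> by simp
    also have "\<dots> = (\<Sum>r<n. of_int (a r) * (x ^ r * y ^ j))"
      unfolding rel by (simp add: sum_distrib_right mult.assoc)
    also have "\<dots> \<in> zspan G"
    proof (intro zspan_sum zspan_smult)
      fix r assume "r \<in> {..<n}"
      hence "x ^ r * y ^ j \<in> G" using G ij by auto
      thus "x ^ r * y ^ j \<in> zspan G" using fin by (rule zspan_gen[rotated])
    qed simp
    finally show ?thesis .
  qed
qed

lemma algebraic_int_closed:
  fixes x y :: complex
  assumes "algebraic_int x" "algebraic_int y"
  shows "algebraic_int (x * y)" "algebraic_int (x + y)"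
proof -
  obtain n a where n: "n > 0" "x ^ n = (\<Sum>r<n. of_int (a r) * x ^ r)"
    by (rule algebraic_int_rel[OF assms(1)])
  obtain m b where m: "m > 0" "y ^ m = (\<Sum>r<m. of_int (b r) * y ^ r)"
    by (rule algebraic_int_rel[OF assms(2)])
  define G where "G = (\<lambda>(i,j). x ^ i * y ^ j) ` ({..<n} \<times> {..<m})"
  have G': "G = (\<lambda>(i,j). y ^ i * x ^ j) ` ({..<m} \<times> {..<n})"
  proof -
    have "(\<lambda>(i,j). y ^ i * x ^ j) ` ({..<m} \<times> {..<n}) = (\<lambda>(i,j). x ^ i * y ^ j) ` (prod.swap ` ({..<m} \<times> {..<n}))"
      by (simp add: image_image case_prod_beta mult.commute)
    also have "prod.swap ` ({..<m} \<times> {..<n}) = {..<n} \<times> {..<m}" by auto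
    finally show ?thesis unfolding G_def by simp
  qed
  have fin: "finite G" unfolding G_def by simp
  have one: "1 \<in> G" unfolding G_def using n m by (auto intro!: image_eqI[of _ _ "(0,0)"])
  have X: "x * g \<in> zspan G" if "g \<in> G" for g using step_x[OF n G_def that] .
  have Y: "y * g \<in> zspan G" if "g \<in> G" for g using step_x[OF m G' that] .
  show "algebraic_int (x * y)"
  proof (rule det_trick[OF fin one])
    fix g assume "g \<in> G"
    hence "x * (y * g) \<in> zspan G" using zspan_mult[OF X Y fin] by blast
    thus "x * y * g \<in> zspan G" by (simp add: mult.assoc)
  qed
  show "algebraic_int (x + y)"
  proof (rule det_trick[OF fin one])
    fix g assume "g \<in> G"
    thus "(x + y) * g \<in> zspan G" using zspan_add[OF X Y] by (simp add: distrib_right)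
  qed
qed

lemma algebraic_int_diff: "algebraic_int (x::complex) \<Longrightarrow> algebraic_int y \<Longrightarrow> algebraic_int (x - y)"
  using algebraic_int_closed(2)[of x "-y"] by auto

lemma algebraic_int_mult: "algebraic_int (x::complex) \<Longrightarrow> algebraic_int y \<Longrightarrow> algebraic_int (x * y)"
  using algebraic_int_closed(1) by auto

lemma algebraic_int_add: "algebraic_int (x::complex) \<Longrightarrow> algebraic_int y \<Longrightarrow> algebraic_int (x + y)"
  using algebraic_int_closed(2) by auto

subsection \<open>Subfields\<close>

lemma sf_gen: "is_subfield (gen_field A)"
  unfolding gen_field_def is_subfield_def by auto

lemma gen_sub: "A \<subseteq> gen_field A"
  unfolding gen_field_def by auto

lemma gen_min: "is_subfield F \<Longrightarrow> A \<subseteq> F \<Longrightarrow> gen_field A \<subseteq> F"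
  unfolding gen_field_def by auto

lemma sf_basic:
  assumes "is_subfield F"
  shows "0 \<in> F" "1 \<in> F" "x \<in> F \<Longrightarrow> y \<in> F \<Longrightarrow> x + y \<in> F"
    "x \<in> F \<Longrightarrow> y \<in> F \<Longrightarrow> x * y \<in> F" "x \<in> F \<Longrightarrow> - x \<in> F"
    "x \<in> F \<Longrightarrow> inverse x \<in> F"
proof -
  show "0 \<in> F" using assms unfolding is_subfield_def by blast
  show "1 \<in> F" using assms unfolding is_subfield_def by blast
  show "x \<in> F \<Longrightarrow> y \<in> F \<Longrightarrow> x + y \<in> F" using assms unfolding is_subfield_def by blast
  show "x \<in> F \<Longrightarrow> y \<in> F \<Longrightarrow> x * y \<in> F" using assms unfolding is_subfield_def by blast
  show "x \<in> F \<Longrightarrow> - x \<in> F" using assms unfolding is_subfield_def by blast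
  show "x \<in> F \<Longrightarrow> inverse x \<in> F" using assms unfolding is_subfield_def
    by (cases "x = 0") auto
qed

lemma sf_diff: "is_subfield F \<Longrightarrow> x \<in> F \<Longrightarrow> y \<in> F \<Longrightarrow> x - y \<in> F"
  using sf_basic[of F] by (metis diff_conv_add_uminus)

lemma sf_div: "is_subfield F \<Longrightarrow> x \<in> F \<Longrightarrow> y \<in> F \<Longrightarrow> x / y \<in> F"
  using sf_basic[of F] by (metis divide_inverse)

lemma sf_pow: "is_subfield F \<Longrightarrow> x \<in> F \<Longrightarrow> x ^ n \<in> F"
  by (induction n) (auto intro: sf_basic)

lemma sf_of_nat: "is_subfield F \<Longrightarrow> of_nat n \<in> F"
  by (induction n) (auto intro: sf_basic)

lemma sf_of_int: "is_subfield F \<Longrightarrow> of_int k \<in> F"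
proof -
  assume F: "is_subfield F"
  have "(of_int k :: complex) = of_nat (nat k) \<or> (of_int k :: complex) = - of_nat (nat (-k))"
    by (cases "k \<ge> 0") auto
  thus ?thesis using sf_of_nat[OF F] sf_basic(5)[OF F] by metis
qed

lemma sf_of_rat: "is_subfield F \<Longrightarrow> (of_rat q :: complex) \<in> F"
proof -
  assume F: "is_subfield F"
  have "(of_rat q :: complex) \<in> \<rat>" by simp
  then obtain a b where "(of_rat q :: complex) = of_int a / of_int b"
    using Rats_cases' by blast
  thus ?thesis using F by (simp add: sf_div sf_of_int)
qed

lemma sf_numeral: "is_subfield F \<Longrightarrow> numeral k \<in> F"
  using sf_of_nat[of F "numeral k"] by simp

subsection \<open>Embeddings\<close>

locale emb_ctx =
  fixes F :: "complex set" and \<tau> :: "complex \<Rightarrow> complex"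
  assumes sf: "is_subfield F" and emb: "field_embedding F \<tau>"
begin

lemma add: "x \<in> F \<Longrightarrow> y \<in> F \<Longrightarrow> \<tau> (x + y) = \<tau> x + \<tau> y"
  using emb unfolding field_embedding_def by blast

lemma mult: "x \<in> F \<Longrightarrow> y \<in> F \<Longrightarrow> \<tau> (x * y) = \<tau> x * \<tau> y"
  using emb unfolding field_embedding_def by blast

lemma one: "\<tau> 1 = 1"
  using emb unfolding field_embedding_def by blast

lemma zero: "\<tau> 0 = 0"
  using add[of 0 0] sf_basic(1)[OF sf] by simp

lemma neg: "x \<in> F \<Longrightarrow> \<tau> (- x) = - \<tau> x"
  using add[of x "-x"] sf_basic(5)[OF sf, of x] zero by (simp add: eq_neg_iff_add_eq_0 add.commute)

lemma diff: "x \<in> F \<Longrightarrow> y \<in> F \<Longrightarrow> \<tau> (x - y) = \<tau> x - \<tau> y"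
  using add[of x "-y"] neg[of y] sf_basic(5)[OF sf, of y] by simp

lemma pow: "x \<in> F \<Longrightarrow> \<tau> (x ^ n) = \<tau> x ^ n"
  by (induction n) (auto simp: one mult sf_pow[OF sf])

lemma inv: "x \<in> F \<Longrightarrow> x \<noteq> 0 \<Longrightarrow> \<tau> (inverse x) = inverse (\<tau> x)"
proof -
  assume x: "x \<in> F" "x \<noteq> 0"
  have "\<tau> x * \<tau> (inverse x) = 1"
    using mult[OF x(1) sf_basic(6)[OF sf x(1)]] x(2) one by simp
  thus ?thesis by (metis inverse_unique)
qed

lemma inj0: "x \<in> F \<Longrightarrow> \<tau> x = 0 \<Longrightarrow> x = 0"
proof (rule ccontr)
  assume x: "x \<in> F" "\<tau> x = 0" "x \<noteq> 0"
  have "\<tau> x * \<tau> (inverse x) = 1"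
    using mult[OF x(1) sf_basic(6)[OF sf x(1)]] x(3) one by simp
  with x(2) show False by simp
qed

lemma fixed_sf: "is_subfield {x \<in> F. \<tau> x = x}"
  unfolding is_subfield_def
proof (intro conjI ballI impI)
  show "0 \<in> {x \<in> F. \<tau> x = x}" using zero sf_basic(1)[OF sf] by simp
  show "1 \<in> {x \<in> F. \<tau> x = x}" using one sf_basic(2)[OF sf] by simp
  fix x assume x: "x \<in> {x \<in> F. \<tau> x = x}"
  show "- x \<in> {x \<in> F. \<tau> x = x}" using x neg sf_basic(5)[OF sf] by simp
  show "x \<noteq> 0 \<Longrightarrow> inverse x \<in> {x \<in> F. \<tau> x = x}" using x inv sf_basic(6)[OF sf] by simp
  fix y assume y: "y \<in> {x \<in> F. \<tau> x = x}"
  show "x + y \<in> {x \<in> F. \<tau> x = x}" using x y add sf_basic(3)[OF sf] by simp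
  show "x * y \<in> {x \<in> F. \<tau> x = x}" using x y mult sf_basic(4)[OF sf] by simp
qed

lemma real_sf: "is_subfield {x \<in> F. \<tau> x \<in> \<real>}"
  unfolding is_subfield_def
proof (intro conjI ballI impI)
  show "0 \<in> {x \<in> F. \<tau> x \<in> \<real>}" using zero sf_basic(1)[OF sf] by simp
  show "1 \<in> {x \<in> F. \<tau> x \<in> \<real>}" using one sf_basic(2)[OF sf] by simp
  fix x assume x: "x \<in> {x \<in> F. \<tau> x \<in> \<real>}"
  show "- x \<in> {x \<in> F. \<tau> x \<in> \<real>}" using x neg sf_basic(5)[OF sf] by simp
  show "x \<noteq> 0 \<Longrightarrow> inverse x \<in> {x \<in> F. \<tau> x \<in> \<real>}" using x inv sf_basic(6)[OF sf] by simp
  fix y assume y: "y \<in> {x \<in> F. \<tau> x \<in> \<real>}"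
  show "x + y \<in> {x \<in> F. \<tau> x \<in> \<real>}" using x y add sf_basic(3)[OF sf] by simp
  show "x * y \<in> {x \<in> F. \<tau> x \<in> \<real>}" using x y mult sf_basic(4)[OF sf] by simp
qed

lemma rat: "\<tau> (of_rat q) = of_rat q"
  using sf_of_rat[OF fixed_sf, of q] by simp

lemma numeral: "\<tau> (numeral k) = numeral k"
  using rat[of "numeral k"] by simp

lemma poly_hom: "x \<in> F \<Longrightarrow> poly (map_poly of_rat p) x \<in> F \<and>
    \<tau> (poly (map_poly of_rat p) x) = poly (map_poly of_rat p) (\<tau> x)"
proof (induction p rule: pCons_induct)
  case 0
  then show ?case using zero sf_basic(1)[OF sf] by simp
next
  case (pCons a p)
  have e: "map_poly of_rat (pCons a p) = pCons (of_rat a :: complex) (map_poly of_rat p)"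
    by (intro poly_eqI) (simp add: coeff_map_poly coeff_pCons split: nat.splits)
  have r: "(of_rat a :: complex) \<in> F" using sf_of_rat[OF sf] .
  from pCons show ?case unfolding e
    by (simp add: add mult r rat sf_basic(3,4)[OF sf])
qed

end
lemma key_num:
  fixes x :: real
  assumes "0 \<le> x" "x \<noteq> 1/2"
  shows "x > 1/2 \<or> (2*x - 1)^2 > 1/2 \<or> x * (4*x - 3)^2 > 1/2"
proof (rule ccontr)
  assume nt: "\<not> (x > 1/2 \<or> (2*x - 1)^2 > 1/2 \<or> x * (4*x - 3)^2 > 1/2)"
  hence h: "x < 1/2" "(2*x-1)^2 \<le> 1/2" using assms by auto
  have q: "16*x^2 - 16*x + 1 \<le> -1" using h(2) by (simp add: power2_eq_square algebra_simps)
  have "x * (4*x - 3)^2 - 1/2 = (x - 1/2) * (16*x^2 - 16*x + 1)"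
    by (simp add: power2_eq_square algebra_simps)
  also have "\<dots> > 0" using h(1) q by (intro mult_neg_neg) auto
  finally show False using nt by simp
qed

theorem proposition5p4:
  fixes \<mu> :: complex and \<tau> :: "complex \<Rightarrow> complex" and D s t u :: complex
  assumes salem: "salem_number \<mu>"
    and deg4: "alg_degree \<mu> = 4"
    and emb: "field_embedding (gen_field {\<mu>}) \<tau>"
    and nontriv: "\<exists>x \<in> gen_field {\<mu> + inverse \<mu>}. \<tau> x \<noteq> x"
    and D: "D \<in> ring_of_integers (gen_field {\<mu> + inverse \<mu>})"
    and s: "s\<^sup>2 = D"
    and ext: "gen_field {\<mu>} = gen_field (gen_field {\<mu> + inverse \<mu>} \<union> {s})"
    and t: "t \<in> ring_of_integers (gen_field {\<mu> + inverse \<mu>})"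
    and u: "u \<in> ring_of_integers (gen_field {\<mu> + inverse \<mu>})"
    and mu: "\<mu> = t + u * s"
  shows "\<exists>m \<in> {0, 1, 2::nat}. \<exists>tm um.
           tm \<in> ring_of_integers (gen_field {\<mu> + inverse \<mu>}) \<and>
           um \<in> ring_of_integers (gen_field {\<mu> + inverse \<mu>}) \<and>
           \<mu> ^ (m + 1) = tm + um * s \<and>
           \<tau> tm \<in> \<real> \<and> (Re (\<tau> tm))\<^sup>2 > 1 / 2"
proof -
  define F where "F = gen_field {\<mu>}"
  define c where "c = \<mu> + inverse \<mu>"
  define K where "K = gen_field {c}"
  have sfF: "is_subfield F" unfolding F_def by (rule sf_gen)
  have sfK: "is_subfield K" unfolding K_def by (rule sf_gen)
  interpret E: emb_ctx F \<tau> using sfF emb unfolding F_def by unfold_locales auto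
  obtain r where r: "\<mu> = of_real r" "r > 1"
    using salem unfolding salem_number_def by (auto elim!: Reals_cases)
  have \<mu>F: "\<mu> \<in> F" using gen_sub unfolding F_def by auto
  have \<mu>0: "\<mu> \<noteq> 0" using r by auto
  have i\<mu>F: "inverse \<mu> \<in> F" using sf_basic(6)[OF sfF \<mu>F] .
  have cF: "c \<in> F" unfolding c_def using sf_basic(3)[OF sfF \<mu>F i\<mu>F] .
  have KF: "K \<subseteq> F" unfolding K_def using gen_min[OF sfF] cF by auto
  have cK: "c \<in> K" unfolding K_def using gen_sub by auto
  define z where "z = \<tau> \<mu>"
  have z0: "z \<noteq> 0" unfolding z_def using E.inj0[OF \<mu>F] \<mu>0 by blast
  have \<tau>i: "\<tau> (inverse \<mu>) = inverse z" unfolding z_def using E.inv[OF \<mu>F \<mu>0] .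
  have \<tau>c: "\<tau> c = z + inverse z" unfolding c_def using E.add[OF \<mu>F i\<mu>F] \<tau>i z_def by simp
  obtain p where p: "min_poly_rat p \<mu>"
    using salem unfolding salem_number_def conjugates_def by blast
  have "poly (map_poly of_rat p) z = 0"
    using E.poly_hom[OF \<mu>F, of p] p E.zero unfolding min_poly_rat_def z_def by simp
  hence zconj: "z \<in> conjugates \<mu>" unfolding conjugates_def using p by blast
  have "z \<noteq> \<mu> \<and> z \<noteq> inverse \<mu>"
  proof (rule ccontr)
    assume "\<not> (z \<noteq> \<mu> \<and> z \<noteq> inverse \<mu>)"
    hence "\<tau> c = c" using \<tau>c unfolding c_def by (auto simp: add.commute)
    hence "K \<subseteq> {x \<in> F. \<tau> x = x}" unfolding K_def using gen_min[OF E.fixed_sf] cF by auto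
    with nontriv show False unfolding K_def c_def by auto
  qed
  hence cm: "cmod z = 1" using salem zconj unfolding salem_number_def by blast
  define a where "a = Re z"
  define b where "b = Im z"
  have ab: "a^2 + b^2 = 1" using cm cmod_power2[of z] unfolding a_def b_def by simp
  have zc: "z * cnj z = 1"
    using ab unfolding a_def b_def by (simp add: complex_eq_iff power2_eq_square)
  have iz: "inverse z = cnj z" using zc by (metis inverse_unique)
  have \<tau>pow: "\<tau> (\<mu> ^ k) = z ^ k" for k unfolding z_def using E.pow[OF \<mu>F] .
  have z2: "z^2 \<noteq> 1"
  proof
    assume "z^2 = 1"
    hence "\<tau> (\<mu>^2 - 1) = 0" using E.diff[OF sf_pow[OF sfF \<mu>F] sf_basic(2)[OF sfF]] \<tau>pow E.one by simp
    hence "\<mu>^2 - 1 = 0" using E.inj0 sf_diff[OF sfF sf_pow[OF sfF \<mu>F] sf_basic(2)[OF sfF]] by blast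
    hence "of_real (r^2 - 1) = (0::complex)" using r(1) by simp
    hence "r^2 - 1 = 0" by (simp only: of_real_eq_0_iff)
    moreover have "r^2 > 1" using one_less_power[OF r(2), of 2] by simp
    ultimately show False by simp
  qed
  have b0: "b \<noteq> 0"
  proof
    assume "b = 0"
    hence "z = of_real a" unfolding a_def b_def by (simp add: complex_eq_iff)
    moreover have "a^2 = 1" using ab \<open>b = 0\<close> by simp
    ultimately have "z^2 = 1" by (metis of_real_1 of_real_power)
    with z2 show False by simp
  qed
  have \<tau>c': "\<tau> c = of_real (2 * a)" using \<tau>c iz complex_add_cnj[of z] unfolding a_def by simp
  have "c \<in> {x \<in> F. \<tau> x \<in> \<real>}" using cF \<tau>c' by simp
  hence KR: "K \<subseteq> {x \<in> F. \<tau> x \<in> \<real>}" unfolding K_def using gen_min[OF E.real_sf] by auto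
  have \<mu>K: "\<mu> \<notin> K"
  proof
    assume "\<mu> \<in> K"
    hence "z \<in> \<real>" using KR unfolding z_def by auto
    hence "b = 0" unfolding b_def by (simp add: complex_is_Real_iff)
    with b0 show False by simp
  qed
  have sK: "s \<notin> K"
  proof
    assume "s \<in> K"
    hence "gen_field (K \<union> {s}) \<subseteq> K" using gen_min[OF sfK] by auto
    hence "F \<subseteq> K" using ext unfolding F_def K_def c_def by simp
    with \<mu>F \<mu>K show False by blast
  qed
  have tK: "t \<in> K" and uK: "u \<in> K" and DK: "D \<in> K"
    and ta: "algebraic_int t" and ua: "algebraic_int u"
    using t u D unfolding ring_of_integers_def K_def c_def by auto
  have quad: "\<mu>^2 - c*\<mu> + 1 = 0" using \<mu>0 unfolding c_def
    by (simp add: field_simps power2_eq_square)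
  have "(t*t + u*u*D - c*t + 1) + s*(u*(2*t - c)) = \<mu>^2 - c*\<mu> + 1"
    unfolding mu s[symmetric] by (simp add: algebra_simps power2_eq_square)
  hence eq: "(t*t + u*u*D - c*t + 1) + s*(u*(2*t - c)) = 0" using quad by simp
  have sfKs: "x \<in> K \<Longrightarrow> y \<in> K \<Longrightarrow> x + y \<in> K" "x \<in> K \<Longrightarrow> y \<in> K \<Longrightarrow> x * y \<in> K"
    "x \<in> K \<Longrightarrow> y \<in> K \<Longrightarrow> x - y \<in> K" "x \<in> K \<Longrightarrow> y \<in> K \<Longrightarrow> x / y \<in> K"
    "x \<in> K \<Longrightarrow> - x \<in> K" "numeral n \<in> K" "1 \<in> K" for x y n
    using sf_basic[OF sfK] sf_diff[OF sfK] sf_div[OF sfK] sf_numeral[OF sfK] by auto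
  have uz: "u*(2*t - c) = 0"
  proof (rule ccontr)
    assume nz: "u*(2*t - c) \<noteq> 0"
    from eq have "s = - (t*t + u*u*D - c*t + 1) / (u*(2*t - c))"
      using nz by (simp add: field_simps add_eq_0_iff)
    moreover have "- (t*t + u*u*D - c*t + 1) / (u*(2*t - c)) \<in> K"
      using tK uK DK cK by (simp add: sfKs)
    ultimately show False using sK by simp
  qed
  have u0: "u \<noteq> 0"
  proof
    assume "u = 0"
    hence "\<mu> = t" using mu by simp
    with tK \<mu>K show False by simp
  qed
  have c2t: "c = t + t" using uz u0 by simp
  have tu1: "u*u*D = t*t - 1" using eq uz c2t by (simp add: algebra_simps)
  have tF: "t \<in> F" using tK KF by auto
  have \<tau>t: "\<tau> t = of_real a"
  proof -
    have "\<tau> t + \<tau> t = of_real (2*a)" using \<tau>c' E.add[OF tF tF] c2t by simp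
    thus ?thesis by (simp add: complex_eq_iff)
  qed
  have a2: "a^2 \<noteq> 1/2"
  proof
    assume a2: "a^2 = 1/2"
    define w where "w = cnj z"
    have zw: "z * w = 1" using zc unfolding w_def .
    have "z + w = of_real (2*a)" unfolding w_def a_def by (rule complex_add_cnj)
    hence "(z + w)^2 = of_real (4 * a^2)" by (simp add: power2_eq_square)
    hence s2: "(z + w)^2 = 2" using a2 by simp
    have "z^2 + w^2 = (z+w)^2 - 2*(z*w)" by (simp add: power2_eq_square algebra_simps)
    hence "z^2 + w^2 = 0" using s2 zw by simp
    hence "z^4 = - 1"
    proof -
      assume h: "z^2 + w^2 = 0"
      have "z^4 = z^2 * z^2" by (simp add: power_add[symmetric])
      also have "z^2 = - (w^2)" using h by (simp add: eq_neg_iff_add_eq_0)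
      finally have "z^4 = - (w^2) * - (w^2)" .
      hence "z^4 = - (z^2 * w^2)" using \<open>z^2 = - (w^2)\<close> by simp
      also have "z^2 * w^2 = (z * w)^2" by (simp add: power_mult_distrib)
      finally show ?thesis using zw by simp
    qed
    hence "\<tau> (\<mu>^4 + 1) = 0" using E.add[OF sf_pow[OF sfF \<mu>F] sf_basic(2)[OF sfF]] \<tau>pow E.one by simp
    hence "\<mu>^4 + 1 = 0" using E.inj0 sf_basic(3)[OF sfF sf_pow[OF sfF \<mu>F] sf_basic(2)[OF sfF]] by blast
    hence "of_real (r^4 + 1) = (0::complex)" using r(1) by simp
    hence "r^4 + 1 = 0" by (simp only: of_real_eq_0_iff)
    moreover have "r^4 + 1 > 0" by (simp add: add_nonneg_pos)
    ultimately show False by simp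
  qed
  have ri: "x \<in> K \<and> algebraic_int x \<Longrightarrow> x \<in> ring_of_integers (gen_field {\<mu> + inverse \<mu>})" for x
    unfolding ring_of_integers_def K_def c_def by simp
  have ai2: "algebraic_int (2::complex)" by simp
  have ai3: "algebraic_int (3::complex)" by simp
  have ai4: "algebraic_int (4::complex)" by simp
  have Fs: "x \<in> F \<Longrightarrow> y \<in> F \<Longrightarrow> x + y \<in> F" "x \<in> F \<Longrightarrow> y \<in> F \<Longrightarrow> x * y \<in> F"
    "x \<in> F \<Longrightarrow> y \<in> F \<Longrightarrow> x - y \<in> F" "numeral n \<in> F" "1 \<in> F" for x y n
    using sf_basic[OF sfF] sf_diff[OF sfF] sf_numeral[OF sfF] by auto
  have "a^2 > 1/2 \<or> (2*a^2 - 1)^2 > 1/2 \<or> a^2 * (4*a^2 - 3)^2 > 1/2"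
    using key_num[of "a^2"] a2 by simp
  moreover
  {
    assume h: "a^2 > 1/2"
    have "\<mu> ^ (0 + 1) = t + u * s \<and> \<tau> t \<in> \<real> \<and> (Re (\<tau> t))\<^sup>2 > 1 / 2"
      using mu \<tau>t h by simp
    hence ?thesis using ri tK uK ta ua by blast
  }
  moreover
  {
    assume h: "(2*a^2 - 1)^2 > 1/2"
    define tm where "tm = 2*t*t - 1"
    define um where "um = 2*t*u"
    have "\<mu> ^ (1 + 1) = t*t + 2*t*u * s + u*u * s^2" unfolding mu by (simp add: power2_eq_square algebra_simps)
    also have "\<dots> = tm + um * s" unfolding s tu1 tm_def um_def by (simp add: algebra_simps)
    finally have e: "\<mu> ^ (1 + 1) = tm + um * s" .
    have "\<tau> tm = of_real (2*a^2 - 1)" unfolding tm_def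
      using tF by (simp add: E.diff E.mult E.numeral E.one Fs \<tau>t power2_eq_square)
    hence "\<tau> tm \<in> \<real> \<and> (Re (\<tau> tm))\<^sup>2 > 1 / 2" using h by simp
    moreover have "tm \<in> ring_of_integers (gen_field {\<mu> + inverse \<mu>})" unfolding tm_def
      by (rule ri) (use tK ta ai2 in \<open>simp add: sfKs algebraic_int_mult algebraic_int_diff\<close>)
    moreover have "um \<in> ring_of_integers (gen_field {\<mu> + inverse \<mu>})" unfolding um_def
      by (rule ri) (use tK uK ta ua ai2 in \<open>simp add: sfKs algebraic_int_mult algebraic_int_diff\<close>)
    ultimately have ?thesis using e by blast
  }
  moreover
  {
    assume h: "a^2 * (4*a^2 - 3)^2 > 1/2"
    define tm where "tm = 4*t*t*t - 3*t"
    define um where "um = u*(4*t*t - 1)"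
    have "\<mu> ^ (2 + 1) = t*t*t + 3*t*t*u * s + 3*t*(u*u * s^2) + u*(u*u * s^2) * s"
      unfolding mu by (simp add: power2_eq_square power3_eq_cube algebra_simps)
    also have "\<dots> = tm + um * s" unfolding s tu1 tm_def um_def by (simp add: algebra_simps)
    finally have e: "\<mu> ^ (2 + 1) = tm + um * s" .
    have "\<tau> tm = of_real (4*a^3 - 3*a)" unfolding tm_def
      using tF by (simp add: E.diff E.mult E.numeral E.one Fs \<tau>t power3_eq_cube)
    moreover have "(4*a^3 - 3*a)^2 = a^2 * (4*a^2 - 3)^2"
      by (simp add: power2_eq_square power3_eq_cube algebra_simps)
    ultimately have "\<tau> tm \<in> \<real> \<and> (Re (\<tau> tm))\<^sup>2 > 1 / 2" using h by simp
    moreover have "tm \<in> ring_of_integers (gen_field {\<mu> + inverse \<mu>})" unfolding tm_def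
      by (rule ri) (use tK ta ai3 ai4 in \<open>simp add: sfKs algebraic_int_mult algebraic_int_diff\<close>)
    moreover have "um \<in> ring_of_integers (gen_field {\<mu> + inverse \<mu>})" unfolding um_def
      by (rule ri) (use tK uK ta ua ai4 in \<open>simp add: sfKs algebraic_int_mult algebraic_int_diff\<close>)
    ultimately have ?thesis using e by blast
  }
  ultimately show ?thesis by blast
qed

end
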